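(* Let $K\ge1$ be an integer and $t_1,t_2\in\mathbb C$. Let $A$ be the $2K\times2K$ matrix with entries \[ A_{i,j}=\frac{1}{2\pi i}\oint_{|u|=2}\frac{u^{i+j-2}\exp\left(\frac{t_1}{u-1}+\frac{t_2}{u+1}\right)}{(u-1)^K}\,du\quad(1\le i\le K,\ 1\le j\le 2K), \] \[ A_{K+i,j}=\frac{1}{2\pi i}\oint_{|u|=2}\frac{u^{i+j-2}\exp\left(\frac{t_1}{u-1}+\frac{t_2}{u+1}\right)}{(u+1)^K}\,du\quad(1\le i\le K,\ 1\le j\le 2K). \] Then $\det A=(-2)^{K^2}$; in particular $\det A$ is independent of $t_1$ and $t_2$.
   Context: The circle $|u|=2$ is positively oriented. *)

theory Defs
  imports "HOL-Complex_Analysis.Complex_Analysis" "Jordan_Normal_Form.Determinant"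
begin

text \<open>Entries of the 2K x 2K matrix A, with 0-based indices i, j < 2K
  (paper index (i+1, j+1)).\<close>
definition A_entry :: "nat \<Rightarrow> complex \<Rightarrow> complex \<Rightarrow> nat \<Rightarrow> nat \<Rightarrow> complex" where
  "A_entry K t1 t2 i j =
     (if i < K then
        contour_integral (circlepath 0 2)
          (\<lambda>u. u ^ (i + j) * exp (t1 / (u - 1) + t2 / (u + 1)) / (u - 1) ^ K)
          / (2 * of_real pi * \<i>)
      else
        contour_integral (circlepath 0 2)
          (\<lambda>u. u ^ (i - K + j) * exp (t1 / (u - 1) + t2 / (u + 1)) / (u + 1) ^ K)
          / (2 * of_real pi * \<i>))"

definition A_mat :: "nat \<Rightarrow> complex \<Rightarrow> complex \<Rightarrow> complex Matrix.mat" where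
  "A_mat K t1 t2 = Matrix.mat (2 * K) (2 * K) (\<lambda>(i, j). A_entry K t1 t2 i j)"

end

theory Submission
  imports Defs
begin


lemma inv_circ: "inverse \<circ> circlepath 0 2 = reversepath (circlepath 0 (1/2))"
proof
  fix x
  have e: "exp (2 * of_real pi * \<i> * of_real (1 - x)) = inverse (exp (2 * of_real pi * \<i> * of_real x))"
  proof -
    have "2 * of_real pi * \<i> * of_real (1 - x) = 2 * of_real pi * \<i> - 2 * of_real pi * \<i> * (of_real x :: complex)"
      by (simp add: algebra_simps)
    then show ?thesis by (simp add: exp_diff exp_minus field_simps)
  qed
  show "(inverse \<circ> circlepath 0 2) x = reversepath (circlepath 0 (1/2)) x"
    unfolding circlepath reversepath_def o_def e by (simp add: field_simps)
qed

lemma core: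
  assumes H: "H holomorphic_on ball 0 1" and n: "n \<ge> 1"
    and F: "\<And>u. u \<in> sphere 0 2 \<Longrightarrow> F u = H (inverse u) / u ^ n"
  shows "contour_integral (circlepath 0 2) F = (if n = 1 then 2 * of_real pi * \<i> * H 0 else 0)"
proof -
  define G where "G w = - H w * w ^ n / w^2" for w :: complex
  have pi0: "path_image (circlepath 0 2) \<subseteq> - {0}" by auto
  have an: "inverse analytic_on (- {0::complex})"
    by (rule analytic_on_inverse[of "\<lambda>x. x", unfolded], auto intro: analytic_intros)
  have "contour_integral (circlepath 0 2) F
      = contour_integral (circlepath 0 2) (\<lambda>w. deriv inverse w * G (inverse w))"
  proof (rule contour_integral_eq)
    fix u assume u: "u \<in> path_image (circlepath 0 2)"
    then have u0: "u \<noteq> 0" by auto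
    have d: "deriv inverse u = - ((inverse u) ^ 2)"
      using DERIV_inverse[OF u0] by (simp add: DERIV_imp_deriv power2_eq_square)
    have Fu: "F u = H (inverse u) / u ^ n" using u by (intro F) auto
    show "F u = deriv inverse u * G (inverse u)"
      using u0 unfolding Fu d G_def
      by (auto simp: field_simps power_inverse)
  qed
  also have "\<dots> = contour_integral (inverse \<circ> circlepath 0 2) G"
    by (rule contour_integral_comp_analyticW[OF an valid_path_circlepath pi0, symmetric])
  also have "\<dots> = - contour_integral (circlepath 0 (1/2)) G"
    unfolding inv_circ by (rule contour_integral_reversepath, simp)
  also have "\<dots> = contour_integral (circlepath 0 (1/2)) (\<lambda>w. H w * w ^ n / w^2)"
    unfolding G_def by (simp add: contour_integral_neg[symmetric])
  also have "\<dots> = (if n = 1 then 2 * of_real pi * \<i> * H 0 else 0)"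
  proof (cases "n = 1")
    case True
    have Hc: "H holomorphic_on cball 0 (1/2)"
      by (rule holomorphic_on_subset[OF H]) auto
    have "contour_integral (circlepath 0 (1/2)) (\<lambda>w. H w * w ^ n / w^2)
        = contour_integral (circlepath 0 (1/2)) (\<lambda>w. H w / (w - 0))"
      by (rule contour_integral_eq) (auto simp: True power2_eq_square)
    also have "\<dots> = 2 * of_real pi * \<i> * H 0"
      by (rule contour_integral_unique[OF Cauchy_integral_circlepath_simple[OF Hc]]) auto
    finally show ?thesis using True by simp
  next
    case False
    then have n2: "n \<ge> 2" using n by auto
    have "contour_integral (circlepath 0 (1/2)) (\<lambda>w. H w * w ^ n / w^2)
        = contour_integral (circlepath 0 (1/2)) (\<lambda>w. H w * w ^ (n - 2))"
    proof (rule contour_integral_eq)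
      fix w :: complex assume "w \<in> path_image (circlepath 0 (1/2))"
      then have w0: "w \<noteq> 0" by auto
      have "w ^ n = w ^ (n - 2) * w ^ 2" using n2 by (metis le_add_diff_inverse2 power_add)
      then show "H w * w ^ n / w^2 = H w * w ^ (n - 2)" using w0 by simp
    qed
    also have "\<dots> = 0"
      by (rule contour_integral_unique[OF Cauchy_theorem_convex_simple[of _ "ball 0 1"]])
         (auto intro!: holomorphic_intros H)
    finally show ?thesis using False by simp
  qed
  finally show ?thesis .
qed

lemma fr_aux: "(p::complex) \<noteq> 0 \<Longrightarrow> r \<noteq> 0 \<Longrightarrow> D \<noteq> 0 \<Longrightarrow> q \<noteq> 0
   \<Longrightarrow> (a / p) * E / (D / q) / r = a * E * (q / (p * r)) / D"
  by (simp add: field_simps)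

lemma Ival:
  fixes t1 t2 :: complex
  assumes kj: "k + j < 2 * K"
  shows "contour_integral (circlepath 0 2)
     (\<lambda>u. (u + 1) ^ k * u ^ j * exp (t1 / (u - 1) + t2 / (u + 1)) / (u\<^sup>2 - 1) ^ K)
     = (if k + j + 1 = 2 * K then 2 * of_real pi * \<i> else 0)"
proof -
  define n where "n = 2 * K - k - j"
  define H where "H w = (1 + w) ^ k * exp (t1 * w / (1 - w) + t2 * w / (1 + w)) / (1 - w\<^sup>2) ^ K"
    for w :: complex
  have n1: "n \<ge> 1" using kj by (simp add: n_def)
  have Hh: "H holomorphic_on ball 0 1"
  proof -
    have "\<And>w::complex. w \<in> ball 0 1 \<Longrightarrow> 1 - w \<noteq> 0 \<and> 1 + w \<noteq> 0 \<and> 1 - w\<^sup>2 \<noteq> 0"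
    proof -
      fix w :: complex assume "w \<in> ball 0 1"
      then have nw: "norm w < 1" by simp
      have "1 - w \<noteq> 0" using nw by (metis norm_one order_less_irrefl right_minus_eq)
      moreover have "1 + w \<noteq> 0" using nw
        by (metis add_eq_0_iff norm_minus_cancel norm_one order_less_irrefl)
      moreover have "1 - w\<^sup>2 = (1 - w) * (1 + w)" by (simp add: algebra_simps power2_eq_square)
      ultimately show "1 - w \<noteq> 0 \<and> 1 + w \<noteq> 0 \<and> 1 - w\<^sup>2 \<noteq> 0" by simp
    qed
    then show ?thesis unfolding H_def by (auto intro!: holomorphic_intros)
  qed
  have "contour_integral (circlepath 0 2)
     (\<lambda>u. (u + 1) ^ k * u ^ j * exp (t1 / (u - 1) + t2 / (u + 1)) / (u\<^sup>2 - 1) ^ K)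
     = (if n = 1 then 2 * of_real pi * \<i> * H 0 else 0)"
  proof (rule core[OF Hh n1])
    fix u :: complex assume u: "u \<in> sphere 0 2"
    then have u0: "u \<noteq> 0" and nu: "norm u = 2" by auto
    have u1: "u - 1 \<noteq> 0" using nu by auto
    have u2: "u + 1 \<noteq> 0"
    proof
      assume "u + 1 = 0" then have "u = -1" by (metis add.commute add_eq_0_iff)
      then show False using nu by simp
    qed
    have u3: "u\<^sup>2 - 1 \<noteq> 0" using u1 u2
      by (metis mult_eq_0_iff square_diff_one_factored power2_eq_square)
    have a: "t1 * inverse u / (1 - inverse u) = t1 / (u - 1)"
      using u0 u1 by (simp add: field_simps)
    have b: "t2 * inverse u / (1 + inverse u) = t2 / (u + 1)"
      using u0 u2 by (simp add: field_simps)
    have c: "(1 + inverse u) ^ k = (u + 1) ^ k / u ^ k"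
    proof -
      have "1 + inverse u = (u + 1) / u" using u0 by (simp add: field_simps)
      then show ?thesis by (simp add: power_divide)
    qed
    have d: "(1 - (inverse u)\<^sup>2) ^ K = (u\<^sup>2 - 1) ^ K / u ^ (2 * K)"
    proof -
      have "1 - (inverse u)\<^sup>2 = (u\<^sup>2 - 1) / u\<^sup>2" using u0 by (simp add: field_simps)
      then show ?thesis by (simp add: power_divide power_mult)
    qed
    have e: "u ^ (2 * K) = u ^ k * u ^ n * u ^ j"
    proof -
      have "2 * K = k + n + j" using kj by (simp add: n_def)
      then show ?thesis by (metis power_add)
    qed
    show "(u + 1) ^ k * u ^ j * exp (t1 / (u - 1) + t2 / (u + 1)) / (u\<^sup>2 - 1) ^ K
        = H (inverse u) / u ^ n"
    proof -
      define E where "E = exp (t1 / (u - 1) + t2 / (u + 1))"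
      have "H (inverse u) / u ^ n = ((u + 1) ^ k / u ^ k) * E / ((u\<^sup>2 - 1) ^ K / u ^ (2 * K)) / u ^ n"
        unfolding H_def a b c d E_def by simp
      also have "\<dots> = (u + 1) ^ k * E * (u ^ (2 * K) / (u ^ k * u ^ n)) / (u\<^sup>2 - 1) ^ K"
        by (rule fr_aux) (use u0 u3 in simp_all)
      also have "u ^ (2 * K) / (u ^ k * u ^ n) = u ^ j" unfolding e using u0 by simp
      finally show ?thesis unfolding E_def by (simp add: mult_ac)
    qed
  qed
  moreover have "H 0 = 1" by (simp add: H_def)
  moreover have "(n = 1) = (k + j + 1 = 2 * K)" using kj by (auto simp: n_def)
  ultimately show ?thesis by simp
qed



lemma det_anti:
  fixes A :: "'a::comm_ring_1 mat"
  assumes "A \<in> carrier_mat n n"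
   "\<And>i j. i < n \<Longrightarrow> j < n \<Longrightarrow> i + j + 1 < n \<Longrightarrow> A $$ (i,j) = 0"
   "\<And>i. i < n \<Longrightarrow> A $$ (i, n - 1 - i) = 1"
  shows "det A = (-1) ^ (n * (n - 1) div 2)"
  using assms
proof (induction n arbitrary: A)
  case 0 then show ?case by simp
next
  case (Suc n)
  have A: "A \<in> carrier_mat (Suc n) (Suc n)" by fact
  have "det A = (\<Sum>j<Suc n. A $$ (0,j) * cofactor A 0 j)"
    by (rule laplace_expansion_row[OF A]) simp
  also have "\<dots> = A $$ (0,n) * cofactor A 0 n"
    using Suc.prems(2)[of 0] by (simp add: sum.lessThan_Suc)
  also have "A $$ (0,n) = 1" using Suc.prems(3)[of 0] by simp
  also have "det (mat_delete A 0 n) = (-1) ^ (n * (n - 1) div 2)"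
  proof (rule Suc.IH)
    show "mat_delete A 0 n \<in> carrier_mat n n" using mat_delete_carrier[OF A] by simp
    have idx: "mat_delete A 0 n $$ (i,j) = A $$ (Suc i, j)" if "i < n" "j < n" for i j
      using A that unfolding mat_delete_def by auto
    show "mat_delete A 0 n $$ (i, j) = 0" if "i < n" "j < n" "i + j + 1 < n" for i j
      using that idx Suc.prems(2)[of "Suc i" j] by simp
    show "mat_delete A 0 n $$ (i, n - 1 - i) = 1" if "i < n" for i
      using that idx Suc.prems(3)[of "Suc i"] by simp
  qed
  then have "cofactor A 0 n = (-1) ^ n * (-1) ^ (n * (n - 1) div 2)"
    unfolding cofactor_def by simp
  also have "(-1) ^ n * (-1) ^ (n * (n - 1) div 2) = ((-1::'a) ^ (Suc n * (Suc n - 1) div 2))"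
  proof -
    have "Suc n * (Suc n - 1) div 2 = n + n * (n - 1) div 2"
      by (cases n) (auto simp: algebra_simps)
    then show ?thesis by (simp add: power_add)
  qed
  finally show ?case by simp
qed

definition sig :: "nat \<Rightarrow> nat \<Rightarrow> complex poly" where
  "sig K r = (if r < K then monom 1 K * [:-1,1:] ^ r else [:-1,1:] ^ (r - K) * [:-2,1:] ^ K)"

definition Smat :: "nat \<Rightarrow> complex mat" where
  "Smat K = mat (2 * K) (2 * K) (\<lambda>(r,k). coeff (sig K r) k)"

definition Umat :: "nat \<Rightarrow> complex mat" where
  "Umat K = mat K K (\<lambda>(i,j). coeff ([:-1,1:] ^ i) j)"

lemma coeff_lin_pow: "coeff ([:c,1:] ^ i) i = 1" "j > i \<Longrightarrow> coeff ([:c,1:] ^ i) j = 0"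
proof -
  have "degree ([:c,1:] ^ i) = i" by (simp add: degree_linear_power)
  then show "j > i \<Longrightarrow> coeff ([:c,1:] ^ i) j = 0"
    by (auto intro: coeff_eq_0)
  show "coeff ([:c,1:] ^ i) i = 1" by (rule coeff_linear_power)
qed

lemma det_U: "det (Umat K) = 1"
proof -
  have "det (Umat K) = prod_list (diag_mat (Umat K))"
    by (rule det_lower_triangular[of K]) (auto simp: Umat_def coeff_lin_pow)
  also have "\<dots> = 1" unfolding prod_list_diag_prod
    by (rule prod.neutral) (auto simp: Umat_def coeff_lin_pow)
  finally show ?thesis .
qed

lemma det_B: "det (mat K K (\<lambda>(i,j). coeff ([:-1,1:] ^ i * [:-2,1:] ^ K :: complex poly) j)) = (-2) ^ (K * K)"
proof -
  define T where "T = mat K K (\<lambda>(m,j). if m \<le> j then coeff ([:-2,1:] ^ K :: complex poly) (j - m) else 0)"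
  have eq: "mat K K (\<lambda>(i,j). coeff ([:-1,1:] ^ i * [:-2,1:] ^ K :: complex poly) j) = Umat K * T"
  proof (rule eq_matI)
    fix i j assume ij: "i < dim_row (Umat K * T)" "j < dim_col (Umat K * T)"
    then have i: "i < K" and j: "j < K" by (auto simp: Umat_def T_def)
    have "(Umat K * T) $$ (i,j) = (\<Sum>m\<in>{0..<K}. coeff ([:-1,1:] ^ i) m *
            (if m \<le> j then coeff ([:-2,1:] ^ K :: complex poly) (j - m) else 0))"
      using i j by (simp add: Umat_def T_def scalar_prod_def)
    also have "\<dots> = (\<Sum>m\<in>{0..<K}. if m \<in> {..j} then coeff ([:-1,1:] ^ i) m *
            coeff ([:-2,1:] ^ K :: complex poly) (j - m) else 0)"
      by (rule sum.cong) auto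
    also have "\<dots> = (\<Sum>m\<in>{0..<K} \<inter> {..j}. coeff ([:-1,1:] ^ i) m *
            coeff ([:-2,1:] ^ K :: complex poly) (j - m))"
      by (rule sum.inter_restrict[symmetric]) simp
    also have "{0..<K} \<inter> {..j} = {..j}" using j by auto
    finally show "mat K K (\<lambda>(i,j). coeff ([:-1,1:] ^ i * [:-2,1:] ^ K :: complex poly) j) $$ (i,j) = (Umat K * T) $$ (i,j)"
      using i j by (simp add: coeff_mult)
  qed (auto simp: Umat_def T_def)
  have T: "T \<in> carrier_mat K K" and U: "Umat K \<in> carrier_mat K K" by (auto simp: T_def Umat_def)
  have "det T = prod_list (diag_mat T)"
    by (rule det_upper_triangular[OF _ T]) (auto simp: T_def)
  also have "\<dots> = (\<Prod>i = 0..<K. (-2) ^ K)"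
    unfolding prod_list_diag_prod using T by (intro prod.cong) (auto simp: T_def coeff_0_power)
  also have "\<dots> = (-2) ^ (K * K)" by (simp add: power_mult[symmetric] mult.commute)
  finally show ?thesis unfolding eq det_mult[OF U T] det_U by simp
qed

lemma det_S: "det (Smat K) = (-1) ^ (K * K) * (-2) ^ (K * K)"
proof -
  have S: "Smat K \<in> carrier_mat (K + K) (K + K)" by (simp add: Smat_def mult_2)
  define C where "C = mat K K (\<lambda>(i,j). coeff (sig K (K + i)) (j + K))"
  define B where "B = mat K K (\<lambda>(i,j). coeff ([:-1,1:] ^ i * [:-2,1:] ^ K :: complex poly) j)"
  have eq: "mat (K + K) (K + K) (\<lambda>(i,j). Smat K $$ (i, if j < K then j + K else j - K))
     = four_block_mat (Umat K) (0\<^sub>m K K) C B"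
    by (rule eq_matI) (auto simp: Smat_def Umat_def C_def B_def sig_def coeff_monom_mult)
  have "det (Smat K) = (-1) ^ (K * K) * det (four_block_mat (Umat K) (0\<^sub>m K K) C B)"
    using det_swap_cols[OF S] unfolding eq .
  also have "det (four_block_mat (Umat K) (0\<^sub>m K K) C B) = det (Umat K) * det B"
    by (rule det_four_block_mat_upper_right_zero) (auto simp: Umat_def C_def B_def)
  finally show ?thesis unfolding det_U B_def det_B by simp
qed


lemma poly_sum_lt:
  fixes p :: "complex poly"
  assumes "degree p < n"
  shows "poly p x = (\<Sum>k<n. coeff p k * x ^ k)"
proof -
  have "(\<Sum>k<n. coeff p k * x ^ k) = (\<Sum>k\<le>degree p. coeff p k * x ^ k)"
    by (rule sum.mono_neutral_right) (use assms in \<open>auto simp: coeff_eq_0\<close>)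
  then show ?thesis by (simp add: poly_altdef)
qed

lemma degree_sig: "r < 2 * K \<Longrightarrow> degree (sig K r) < 2 * K"
proof -
  assume r: "r < 2 * K"
  have d1: "degree ([:c,1:] ^ m :: complex poly) = m" for c m by (rule degree_linear_power)
  show ?thesis
  proof (cases "r < K")
    case True
    have "degree (monom (1::complex) K * [:-1,1:] ^ r) \<le> degree (monom (1::complex) K) + degree ([:-1,1:] ^ r :: complex poly)"
      by (rule degree_mult_le)
    also have "\<dots> = K + r" by (simp add: degree_monom_eq d1)
    finally show ?thesis using True by (simp add: sig_def)
  next
    case False
    have "degree ([:-1,1:] ^ (r - K) * [:-2,1:] ^ K :: complex poly) \<le> degree ([:-1,1:] ^ (r - K) :: complex poly) + degree ([:-2,1:] ^ K :: complex poly)"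
      by (rule degree_mult_le)
    also have "\<dots> = r" using False by (simp add: d1)
    finally show ?thesis using False r by (simp add: sig_def)
  qed
qed

definition psi :: "nat \<Rightarrow> complex \<Rightarrow> complex \<Rightarrow> nat \<Rightarrow> nat \<Rightarrow> complex \<Rightarrow> complex" where
  "psi K t1 t2 k j u = (u + 1) ^ k * u ^ j * exp (t1 / (u - 1) + t2 / (u + 1)) / (u\<^sup>2 - 1) ^ K"

definition Imat :: "nat \<Rightarrow> complex \<Rightarrow> complex \<Rightarrow> complex mat" where
  "Imat K t1 t2 = mat (2 * K) (2 * K) (\<lambda>(k,j). contour_integral (circlepath 0 2) (psi K t1 t2 k j) / (2 * of_real pi * \<i>))"

lemma det_I: "det (Imat K t1 t2) = (-1) ^ (2 * K * (2 * K - 1) div 2)"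
proof (rule det_anti)
  show "Imat K t1 t2 \<in> carrier_mat (2 * K) (2 * K)" by (simp add: Imat_def)
  show "Imat K t1 t2 $$ (i, j) = 0" if "i < 2 * K" "j < 2 * K" "i + j + 1 < 2 * K" for i j
    using that Ival[of i j K t1 t2] by (simp add: Imat_def psi_def[abs_def])
  show "Imat K t1 t2 $$ (i, 2 * K - 1 - i) = 1" if "i < 2 * K" for i
    using that Ival[of i "2 * K - 1 - i" K t1 t2] by (simp add: Imat_def psi_def[abs_def])
qed

lemma psi_integrable: "(\<lambda>u. c * psi K t1 t2 k j u) contour_integrable_on circlepath 0 2"
proof (rule contour_integrable_holomorphic_simple[of _ "- {1, -1}"])
  have nz: "u - 1 \<noteq> 0 \<and> u + 1 \<noteq> 0 \<and> u\<^sup>2 - 1 \<noteq> 0" if "u \<in> - {1, -1}" for u :: complex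
  proof -
    have a: "u - 1 \<noteq> 0" using that by auto
    have b: "u + 1 \<noteq> 0"
    proof
      assume "u + 1 = 0" then have "u = -1" by (metis add.commute add_eq_0_iff)
      then show False using that by simp
    qed
    have "u\<^sup>2 - 1 = (u - 1) * (u + 1)" by (simp add: algebra_simps power2_eq_square)
    then show ?thesis using a b by simp
  qed
  show "(\<lambda>u. c * psi K t1 t2 k j u) holomorphic_on - {1, - 1}"
    unfolding psi_def by (intro holomorphic_intros) (use nz in auto)
  show "open (- {1, - 1::complex})" by (intro open_Compl) auto
  show "path_image (circlepath 0 2) \<subseteq> - {1, - 1}" by auto
qed simp

lemma aux1: "(a::complex) \<noteq> 0 \<Longrightarrow> b \<noteq> 0 \<Longrightarrow> p * q * X / a = b * p * (q * X / (a * b))"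
  by (simp add: field_simps)

lemma aux2: "(a::complex) \<noteq> 0 \<Longrightarrow> b \<noteq> 0 \<Longrightarrow> p * q * X / b = p * a * (q * X / (a * b))"
  by (simp add: field_simps)

lemma pow_nz: "(x::complex) \<noteq> 0 \<Longrightarrow> x ^ n \<noteq> 0" by simp

lemma entry_eq:
  assumes r: "r < 2 * K" and j: "j < 2 * K"
  shows "A_entry K t1 t2 r j = (\<Sum>k<2 * K. coeff (sig K r) k *
           (contour_integral (circlepath 0 2) (psi K t1 t2 k j) / (2 * of_real pi * \<i>)))"
proof -
  define c where "c = 2 * of_real pi * \<i>"
  define F where "F = (if r < K then (\<lambda>u. u ^ (r + j) * exp (t1 / (u - 1) + t2 / (u + 1)) / (u - 1) ^ K)
       else (\<lambda>u. u ^ (r - K + j) * exp (t1 / (u - 1) + t2 / (u + 1)) / (u + 1) ^ K))"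
  have A: "A_entry K t1 t2 r j = contour_integral (circlepath 0 2) F / c"
    unfolding A_entry_def F_def c_def by simp
  have "contour_integral (circlepath 0 2) F
     = contour_integral (circlepath 0 2) (\<lambda>u. \<Sum>k<2 * K. coeff (sig K r) k * psi K t1 t2 k j u)"
  proof (rule contour_integral_eq)
    fix u assume "u \<in> path_image (circlepath 0 2)"
    then have nu: "norm u = 2" by simp
    have u1: "u - 1 \<noteq> 0" using nu by auto
    have u2: "u + 1 \<noteq> 0"
    proof
      assume "u + 1 = 0" then have "u = -1" by (metis add.commute add_eq_0_iff)
      then show False using nu by simp
    qed
    have D: "(u\<^sup>2 - 1) ^ K = (u - 1) ^ K * (u + 1) ^ K"
      by (simp add: power_mult_distrib[symmetric] algebra_simps power2_eq_square)
    define X where "X = exp (t1 / (u - 1) + t2 / (u + 1))"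
    have "(\<Sum>k<2 * K. coeff (sig K r) k * psi K t1 t2 k j u)
        = (\<Sum>k<2 * K. coeff (sig K r) k * (u + 1) ^ k) * (u ^ j * X / (u\<^sup>2 - 1) ^ K)"
      unfolding psi_def X_def sum_distrib_right by (simp add: mult_ac)
    also have "(\<Sum>k<2 * K. coeff (sig K r) k * (u + 1) ^ k) = poly (sig K r) (u + 1)"
      by (rule poly_sum_lt[OF degree_sig[OF r], symmetric])
    finally have S: "(\<Sum>k<2 * K. coeff (sig K r) k * psi K t1 t2 k j u)
        = poly (sig K r) (u + 1) * (u ^ j * X / (u\<^sup>2 - 1) ^ K)" .
    show "F u = (\<Sum>k<2 * K. coeff (sig K r) k * psi K t1 t2 k j u)"
    proof (cases "r < K")
      case True
      have P: "poly (sig K r) (u + 1) = (u + 1) ^ K * u ^ r" using True by (simp add: sig_def poly_monom)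
      have "F u = u ^ r * u ^ j * X / (u - 1) ^ K" using True by (simp add: F_def X_def power_add)
      also have "\<dots> = (u + 1) ^ K * u ^ r * (u ^ j * X / ((u - 1) ^ K * (u + 1) ^ K))"
        by (rule aux1[OF pow_nz[OF u1] pow_nz[OF u2]])
      finally show ?thesis unfolding S P D .
    next
      case False
      have P: "poly (sig K r) (u + 1) = u ^ (r - K) * (u - 1) ^ K" using False
        by (simp add: sig_def)
      have pw: "u ^ (r - K + j) = u ^ (r - K) * u ^ j" by (rule power_add)
      have "F u = u ^ (r - K) * u ^ j * X / (u + 1) ^ K"
        unfolding F_def X_def if_not_P[OF False] pw by simp
      also have "\<dots> = u ^ (r - K) * (u - 1) ^ K * (u ^ j * X / ((u - 1) ^ K * (u + 1) ^ K))"
        by (rule aux2[OF pow_nz[OF u1] pow_nz[OF u2]])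
      finally show ?thesis unfolding S P D .
    qed
  qed
  also have "\<dots> = (\<Sum>k<2 * K. contour_integral (circlepath 0 2) (\<lambda>u. coeff (sig K r) k * psi K t1 t2 k j u))"
    by (rule contour_integral_sum) (auto intro: psi_integrable)
  also have "\<dots> = (\<Sum>k<2 * K. coeff (sig K r) k * contour_integral (circlepath 0 2) (psi K t1 t2 k j))"
    by (rule sum.cong[OF refl], rule contour_integral_lmul)
       (use psi_integrable[of 1] in simp)
  finally show ?thesis unfolding A c_def by (simp add: sum_divide_distrib)
qed

theorem lemma1:
  fixes K :: nat and t1 t2 :: complex
  assumes "K \<ge> 1"
  shows "Determinant.det (A_mat K t1 t2) = (-2) ^ (K ^ 2)"
proof -
  have eq: "A_mat K t1 t2 = Smat K * Imat K t1 t2"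
  proof (rule eq_matI)
    fix i j assume "i < dim_row (Smat K * Imat K t1 t2)" "j < dim_col (Smat K * Imat K t1 t2)"
    then have i: "i < 2 * K" and j: "j < 2 * K" by (auto simp: Smat_def Imat_def)
    have "A_mat K t1 t2 $$ (i, j) = A_entry K t1 t2 i j" using i j by (simp add: A_mat_def)
    also have "\<dots> = (Smat K * Imat K t1 t2) $$ (i, j)"
      unfolding entry_eq[OF i j]
      using i j by (simp add: Smat_def Imat_def scalar_prod_def atLeast0LessThan)
    finally show "A_mat K t1 t2 $$ (i, j) = (Smat K * Imat K t1 t2) $$ (i, j)" .
  qed (auto simp: A_mat_def Smat_def Imat_def)
  have "det (A_mat K t1 t2) = det (Smat K) * det (Imat K t1 t2)"
    unfolding eq by (rule det_mult) (auto simp: Smat_def Imat_def)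
  also have "\<dots> = (-1) ^ (K * K) * (-2) ^ (K * K) * (-1) ^ (2 * K * (2 * K - 1) div 2)"
    unfolding det_S det_I ..
  also have "2 * K * (2 * K - 1) div 2 = K * (2 * K - 1)" by simp
  also have "(-1::complex) ^ (K * K) * (-2) ^ (K * K) * (-1) ^ (K * (2 * K - 1)) = (-2) ^ (K ^ 2)"
  proof -
    have ev: "even (K * K + K * (2 * K - 1))"
    proof -
      have "K * K + K * (2 * K - 1) = 2 * (K * K) + K * (K - 1)"
        by (cases K) (auto simp: algebra_simps)
      then show ?thesis by auto
    qed
    have "(-1::complex) ^ (K * K) * (-1) ^ (K * (2 * K - 1)) = 1"
      using ev by (simp add: power_add[symmetric])
    then show ?thesis by (simp add: power2_eq_square mult_ac)
  qed
  finally show ?thesis .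
qed

end
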